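(* Let $v$ be a radial mapping and let $u$ be a Borel function on $D$ having radial limits $\tilde u$ $\mu$-a.e. with respect to $v$, where $\tilde u$ is a real $\mu$-measurable function on $K_0$. Then $u$ has boundary values equal to $\tilde u$.
   Context: Standing setting: $D$ is a bounded domain in $\mathbb R^n$ exhausted by domains $D_r$, $r<0$, with $D_r\Subset D_s$ for $r<s<0$ and $\bigcup_{r<0}D_r=D$; $S_r=\partial D_r$. For each $r<0$, $\mu_r$ is a finite positive regular Borel measure supported on $S_r$, and $\mu_r\to\mu$ weak-* in $C(\overline D)^*$ as $r\to0^-$, where $\mu$ is a finite positive measure supported on $\partial D$; $K_0=\operatorname{supp}\mu$. For a sequence $r_j\nearrow0$ and functions $\phi_j$ on $\operatorname{supp}\mu_{r_j}$, $\{\phi_j\}$ has strong limit values $\phi^*$ (a real $\mu$-measurable function on $K_0$) if for all real $a<b$ and $\varepsilon,\delta>0$ there are $j_0$ and an open set $O\subset\overline D$ containing $\{x\in K_0:a\le\phi^*(x)<b\}$ with $\mu_{r_j}(\{\phi_j<a-\varepsilon\}\cap O)+\mu_{r_j}(\{\phi_j>b+\varepsilon\}\cap O)<\delta$ for $j\ge j_0$. A function $u$ on $D$ has boundary values $u^*$ if for every sequence $r_j\nearrow0$ the sequence $\{u|_{\operatorname{supp}\mu_{r_j}}\}$ has strong limit values with respect to $\{\mu_{r_j}\}$, equal to $u^*$ ($\mu$-a.e.) independently of the sequence. A continuous map $v:K_0\times[0,\varepsilon_0)\to\mathbb R^n$ ($\varepsilon_0>0$) is radial if: (i) $v(\zeta,0)=\zeta$;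 (ii) there is $r_0<0$ such that for every $\zeta\in K_0$ and every $r\in(r_0,0)$ the set $\{t:v(\zeta,t)\in S_r\}$ is nonempty, and the functions $t_r(\zeta)=\inf\{t:v(\zeta,t)\in S_r\}$ are continuous on $K_0$ and converge uniformly to $0$ as $r\to0^-$; (iii) there is $c>0$ such that for every Borel $E\subset K_0$, with $E_r=\{v(\zeta,t_r(\zeta)):\zeta\in E\}$, $\limsup_{r\to0^-}\mu_r(E_r)\le c\mu(E)$; (iv) with $A_r=\{v(\zeta,t_r(\zeta)):\zeta\in K_0\}$, $\limsup_{r\to0^-}\mu_r(S_r\setminus A_r)=0$. A function $u$ on $D$ has radial limits $\tilde u$ $\mu$-a.e. with respect to $v$ if $\lim_{t\to0^+}u(v(\zeta,t))$ exists and equals $\tilde u(\zeta)$ for $\mu$-a.e. $\zeta\in K_0$. *)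

theory Defs
  imports "HOL-Analysis.Analysis"
begin

definition measure_support :: "'a::topological_space measure \<Rightarrow> 'a set" where
  "measure_support M = {x. \<forall>U. open U \<and> x \<in> U \<longrightarrow> emeasure M U > 0}"

definition standing_setting ::
  "'a::euclidean_space set \<Rightarrow> (real \<Rightarrow> 'a set) \<Rightarrow> (real \<Rightarrow> 'a measure) \<Rightarrow> 'a measure \<Rightarrow> bool" where
  "standing_setting D Dr mu mu0 \<longleftrightarrow>
     open D \<and> connected D \<and> D \<noteq> {} \<and> bounded D \<and>
     (\<forall>r<0. open (Dr r) \<and> connected (Dr r) \<and> Dr r \<noteq> {}) \<and>
     (\<forall>r s. r < s \<and> s < 0 \<longrightarrow> compact (closure (Dr r)) \<and> closure (Dr r) \<subseteq> Dr s) \<and>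
     (\<Union>r\<in>{..<0}. Dr r) = D \<and>
     (\<forall>r<0. sets (mu r) = sets borel \<and> finite_measure (mu r) \<and>
            measure_support (mu r) \<subseteq> frontier (Dr r)) \<and>
     sets mu0 = sets borel \<and> finite_measure mu0 \<and> measure_support mu0 \<subseteq> frontier D \<and>
     (\<forall>f::'a \<Rightarrow> real. continuous_on (closure D) f \<longrightarrow>
        ((\<lambda>r. (\<integral>x\<in>closure D. f x \<partial>mu r)) \<longlongrightarrow> (\<integral>x\<in>closure D. f x \<partial>mu0)) (at_left 0))"

definition has_strong_limit_values ::
  "'a::euclidean_space set \<Rightarrow> (real \<Rightarrow> 'a measure) \<Rightarrow> 'a measure \<Rightarrow> (nat \<Rightarrow> real)
   \<Rightarrow> (nat \<Rightarrow> 'a \<Rightarrow> real) \<Rightarrow> ('a \<Rightarrow> real) \<Rightarrow> bool" where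
  "has_strong_limit_values D mu mu0 rj phi phis \<longleftrightarrow>
     phis \<in> borel_measurable (completion mu0) \<and>
     (\<forall>a b \<epsilon> \<delta>. a < b \<and> \<epsilon> > 0 \<and> \<delta> > 0 \<longrightarrow>
        (\<exists>j0 W. openin (top_of_set (closure D)) W \<and>
           {x \<in> measure_support mu0. a \<le> phis x \<and> phis x < b} \<subseteq> W \<and>
           (\<forall>j\<ge>j0.
              outer_measure_of (mu (rj j))
                  ({x \<in> measure_support (mu (rj j)). phi j x < a - \<epsilon>} \<inter> W)
            + outer_measure_of (mu (rj j))
                  ({x \<in> measure_support (mu (rj j)). phi j x > b + \<epsilon>} \<inter> W)
            < ennreal \<delta>)))"

definition has_boundary_values ::
  "'a::euclidean_space set \<Rightarrow> (real \<Rightarrow> 'a measure) \<Rightarrow> 'a measure \<Rightarrow> ('a \<Rightarrow> real) \<Rightarrow> ('a \<Rightarrow> real) \<Rightarrow> bool" where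
  "has_boundary_values D mu mu0 u ustar \<longleftrightarrow>
     (\<forall>rj::nat \<Rightarrow> real. incseq rj \<and> (\<forall>j. rj j < 0) \<and> rj \<longlonglongrightarrow> 0 \<longrightarrow>
        (\<exists>phis. has_strong_limit_values D mu mu0 rj (\<lambda>j. u) phis \<and>
                (AE x in mu0. phis x = ustar x)))"

definition hit_time :: "(real \<Rightarrow> 'a::euclidean_space set) \<Rightarrow> ('a \<Rightarrow> real \<Rightarrow> 'a) \<Rightarrow> real \<Rightarrow> real \<Rightarrow> 'a \<Rightarrow> real" where
  "hit_time Dr v eps0 r \<zeta> = Inf {t \<in> {0..<eps0}. v \<zeta> t \<in> frontier (Dr r)}"

definition radial_map ::
  "(real \<Rightarrow> 'a::euclidean_space set) \<Rightarrow> (real \<Rightarrow> 'a measure) \<Rightarrow> 'a measure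
   \<Rightarrow> ('a \<Rightarrow> real \<Rightarrow> 'a) \<Rightarrow> real \<Rightarrow> bool" where
  "radial_map Dr mu mu0 v eps0 \<longleftrightarrow>
     (let K0 = measure_support mu0; t = hit_time Dr v eps0 in
     eps0 > 0 \<and>
     continuous_on (K0 \<times> {0..<eps0}) (\<lambda>(\<zeta>, s). v \<zeta> s) \<and>
     (\<forall>\<zeta>\<in>K0. v \<zeta> 0 = \<zeta>) \<and>
     (\<exists>r0<0. (\<forall>\<zeta>\<in>K0. \<forall>r\<in>{r0<..<0}. {s \<in> {0..<eps0}. v \<zeta> s \<in> frontier (Dr r)} \<noteq> {}) \<and>
             (\<forall>r\<in>{r0<..<0}. continuous_on K0 (t r)) \<and>
             uniform_limit K0 t (\<lambda>_. 0) (at_left 0)) \<and>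
     (\<exists>c>0. \<forall>E\<in>sets borel. E \<subseteq> K0 \<longrightarrow>
        Limsup (at_left 0) (\<lambda>r. outer_measure_of (mu r) ((\<lambda>\<zeta>. v \<zeta> (t r \<zeta>)) ` E))
          \<le> ennreal c * emeasure mu0 E) \<and>
     Limsup (at_left 0) (\<lambda>r. outer_measure_of (mu r)
          (frontier (Dr r) - (\<lambda>\<zeta>. v \<zeta> (t r \<zeta>)) ` K0)) = 0)"

definition has_radial_limits ::
  "'a::euclidean_space measure \<Rightarrow> ('a \<Rightarrow> real \<Rightarrow> 'a) \<Rightarrow> ('a \<Rightarrow> real) \<Rightarrow> ('a \<Rightarrow> real) \<Rightarrow> bool" where
  "has_radial_limits mu0 v u ut \<longleftrightarrow>
     (AE \<zeta> in mu0. \<zeta> \<in> measure_support mu0 \<longrightarrow> ((\<lambda>t. u (v \<zeta> t)) \<longlongrightarrow> ut \<zeta>) (at_right 0))"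

end

theory Submission
  imports Defs
begin


lemma closed_measure_support: "closed (measure_support M)"
proof -
  have "open (- measure_support M)"
  proof (subst open_subopen, intro ballI)
    fix x assume "x \<in> - measure_support M"
    then obtain U where U: "open U" "x \<in> U" "\<not> emeasure M U > 0"
      unfolding measure_support_def by auto
    then have "U \<subseteq> - measure_support M" unfolding measure_support_def by auto
    with U show "\<exists>T. open T \<and> x \<in> T \<and> T \<subseteq> - measure_support M" by blast
  qed
  then show ?thesis by (simp add: closed_def)
qed

lemma outer_measure_of_Un:
  assumes "A \<subseteq> space M" "B \<subseteq> space M"
  shows "outer_measure_of M (A \<union> B) \<le> outer_measure_of M A + outer_measure_of M B"
proof -
  obtain EA where EA: "EA \<in> sets M" "A \<subseteq> EA" "outer_measure_of M A = emeasure M EA"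
    using outer_measure_of_attain[OF assms(1)] by blast
  obtain EB where EB: "EB \<in> sets M" "B \<subseteq> EB" "outer_measure_of M B = emeasure M EB"
    using outer_measure_of_attain[OF assms(2)] by blast
  have "outer_measure_of M (A \<union> B) \<le> outer_measure_of M (EA \<union> EB)"
    using EA EB by (intro outer_measure_of_mono) auto
  also have "\<dots> = emeasure M (EA \<union> EB)" using EA EB by simp
  also have "\<dots> \<le> emeasure M EA + emeasure M EB" using EA EB by (intro emeasure_subadditive)
  finally show ?thesis using EA EB by simp
qed

lemma Inf_hit_mem:
  fixes g :: "real \<Rightarrow> 'a::topological_space"
  assumes cont: "continuous_on {0..<e} g" and F: "closed F"
    and ne: "{t \<in> {0..<e}. g t \<in> F} \<noteq> {}"
  shows "Inf {t \<in> {0..<e}. g t \<in> F} \<in> {t \<in> {0..<e}. g t \<in> F}"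
proof -
  let ?S = "{t \<in> {0..<e}. g t \<in> F}"
  have S: "?S = {0..<e} \<inter> g -` F" by auto
  have "closedin (top_of_set {0..<e}) ?S"
    unfolding S by (rule continuous_closedin_preimage[OF cont F])
  then obtain T where T: "closed T" "?S = {0..<e} \<inter> T"
    by (auto simp: closedin_closed)
  have bdd: "bdd_below ?S" by (rule bdd_belowI[of _ 0]) auto
  have "Inf ?S \<in> closure ?S" by (rule closure_contains_Inf[OF ne bdd])
  also have "\<dots> \<subseteq> T" using T by (intro closure_minimal) auto
  finally have inT: "Inf ?S \<in> T" .
  obtain s where s: "s \<in> ?S" using ne by blast
  have "Inf ?S \<le> s" using s bdd by (intro cInf_lower)
  moreover have "0 \<le> Inf ?S" using ne by (intro cInf_greatest) auto
  ultimately have "Inf ?S \<in> {0..<e}" using s by auto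
  with inT T show ?thesis by blast
qed



theorem theorem5p5:
  fixes D :: "'a::euclidean_space set" and Dr :: "real \<Rightarrow> 'a set"
    and mu :: "real \<Rightarrow> 'a measure" and mu0 :: "'a measure"
    and v :: "'a \<Rightarrow> real \<Rightarrow> 'a" and eps0 :: real
    and u ut :: "'a \<Rightarrow> real"
  assumes "standing_setting D Dr mu mu0"
    and "radial_map Dr mu mu0 v eps0"
    and "u \<in> borel_measurable (restrict_space borel D)"
    and "ut \<in> borel_measurable (completion mu0)"
    and "has_radial_limits mu0 v u ut"
  shows "has_boundary_values D mu mu0 u ut"
proof -
  define K where "K = measure_support mu0"
  define T where "T = hit_time Dr v eps0"
  define P where "P = (\<lambda>r \<zeta>. v \<zeta> (T r \<zeta>))"
  note SS = assms(1)[unfolded standing_setting_def]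
  have Dopen: "open D" using SS by blast
  have Dbdd: "bounded D" using SS by blast
  have Dr_cl0: "\<forall>r s. r < s \<and> s < 0 \<longrightarrow> compact (closure (Dr r)) \<and> closure (Dr r) \<subseteq> Dr s"
    using SS by blast
  have Dr_cl: "\<And>r s. r < s \<Longrightarrow> s < 0 \<Longrightarrow> closure (Dr r) \<subseteq> Dr s" using Dr_cl0 by blast
  have DrD: "(\<Union>r\<in>{..<0}. Dr r) = D" using SS by blast
  have mur0: "\<forall>r<0. sets (mu r) = sets borel \<and> finite_measure (mu r) \<and>
            measure_support (mu r) \<subseteq> frontier (Dr r)" using SS by blast
  have mur: "\<And>r. r < 0 \<Longrightarrow> sets (mu r) = sets borel" 
     "\<And>r. r < 0 \<Longrightarrow> measure_support (mu r) \<subseteq> frontier (Dr r)" using mur0 by auto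
  have mu0s: "sets mu0 = sets borel" using SS by blast
  have mu0f: "finite_measure mu0" using SS by blast
  have Kfr: "K \<subseteq> frontier D" using SS unfolding K_def by blast
  note RR = assms(2)[unfolded radial_map_def Let_def, folded K_def T_def]
  have eps0: "eps0 > 0" using RR by blast
  have vcont: "continuous_on (K \<times> {0..<eps0}) (\<lambda>(\<zeta>, s). v \<zeta> s)" using RR by blast
  have v0: "\<And>\<zeta>. \<zeta> \<in> K \<Longrightarrow> v \<zeta> 0 = \<zeta>" using RR by blast
  have ex_r0: "\<exists>r0<0. (\<forall>\<zeta>\<in>K. \<forall>r\<in>{r0<..<0}. {s \<in> {0..<eps0}. v \<zeta> s \<in> frontier (Dr r)} \<noteq> {}) \<and>
             (\<forall>r\<in>{r0<..<0}. continuous_on K (T r)) \<and>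
             uniform_limit K T (\<lambda>_. 0) (at_left 0)" using RR by blast
  then obtain r0 where r0: "r0 < 0"
    and hitne: "\<And>\<zeta> r. \<zeta> \<in> K \<Longrightarrow> r \<in> {r0<..<0} \<Longrightarrow> {s \<in> {0..<eps0}. v \<zeta> s \<in> frontier (Dr r)} \<noteq> {}"
    and Tcont: "\<And>r. r \<in> {r0<..<0} \<Longrightarrow> continuous_on K (T r)"
    and Tunif: "uniform_limit K T (\<lambda>_. 0) (at_left 0)"
    by blast
  have ex_c: "\<exists>c>0. \<forall>E\<in>sets borel. E \<subseteq> K \<longrightarrow>
        Limsup (at_left 0) (\<lambda>r. outer_measure_of (mu r) (P r ` E))
          \<le> ennreal c * emeasure mu0 E" using RR unfolding P_def by blast
  then obtain c where c: "c > 0"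
    and iii: "\<And>E. E \<in> sets borel \<Longrightarrow> E \<subseteq> K \<Longrightarrow>
        Limsup (at_left 0) (\<lambda>r. outer_measure_of (mu r) (P r ` E)) \<le> ennreal c * emeasure mu0 E"
    by blast
  have iv: "Limsup (at_left 0) (\<lambda>r. outer_measure_of (mu r) (frontier (Dr r) - P r ` K)) = 0"
    using RR unfolding P_def by blast
  have spaceB: "space mu0 = UNIV" using sets_eq_imp_space_eq[OF mu0s] by simp
  have spaceR: "\<And>r. r < 0 \<Longrightarrow> space (mu r) = UNIV" using sets_eq_imp_space_eq[OF mur(1)] by simp
  have KD: "K \<inter> D = {}" using Kfr Dopen by (auto simp: frontier_def interior_open)
  have Kclosed: "closed K" unfolding K_def by (rule closed_measure_support)
  have Kcompact: "compact K"
  proof -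
    have "bounded (frontier D)" using Dbdd bounded_closure bounded_subset
      by (metis Diff_subset frontier_def)
    then have "bounded K" using Kfr bounded_subset by blast
    then show ?thesis using Kclosed by (simp add: compact_eq_bounded_closed)
  qed
  have Kcl: "K \<subseteq> closure D" using Kfr by (auto simp: frontier_def)
  have frD: "\<And>r. r < 0 \<Longrightarrow> frontier (Dr r) \<subseteq> D"
  proof -
    fix r :: real assume r: "r < 0"
    have "frontier (Dr r) \<subseteq> closure (Dr r)" by (auto simp: frontier_def)
    also have "\<dots> \<subseteq> Dr (r/2)" using Dr_cl[of r "r/2"] r by auto
    also have "\<dots> \<subseteq> D" using DrD r by auto
    finally show "frontier (Dr r) \<subseteq> D" .
  qed
  have vz: "\<And>\<zeta>. \<zeta> \<in> K \<Longrightarrow> continuous_on {0..<eps0} (v \<zeta>)"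
  proof -
    fix \<zeta> assume z: "\<zeta> \<in> K"
    have "continuous_on {0..<eps0} ((\<lambda>(\<zeta>, s). v \<zeta> s) \<circ> (\<lambda>s. (\<zeta>, s)))"
      by (rule continuous_on_compose) (auto intro!: continuous_intros continuous_on_subset[OF vcont] simp: z)
    then show "continuous_on {0..<eps0} (v \<zeta>)" by (simp add: o_def)
  qed
  have hit: "\<And>r \<zeta>. r \<in> {r0<..<0} \<Longrightarrow> \<zeta> \<in> K \<Longrightarrow> T r \<zeta> \<in> {0..<eps0} \<and> P r \<zeta> \<in> frontier (Dr r)"
  proof -
    fix r \<zeta> assume r: "r \<in> {r0<..<0}" and z: "\<zeta> \<in> K"
    have "Inf {s \<in> {0..<eps0}. v \<zeta> s \<in> frontier (Dr r)} \<in> {s \<in> {0..<eps0}. v \<zeta> s \<in> frontier (Dr r)}"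
      by (rule Inf_hit_mem[OF vz[OF z] frontier_closed hitne[OF z r]])
    then show "T r \<zeta> \<in> {0..<eps0} \<and> P r \<zeta> \<in> frontier (Dr r)"
      unfolding T_def hit_time_def P_def by auto
  qed
  have Tpos: "\<And>r \<zeta>. r \<in> {r0<..<0} \<Longrightarrow> \<zeta> \<in> K \<Longrightarrow> T r \<zeta> > 0"
  proof -
    fix r \<zeta> assume r: "r \<in> {r0<..<0}" and z: "\<zeta> \<in> K"
    have h: "T r \<zeta> \<in> {0..<eps0}" "P r \<zeta> \<in> D" using hit[OF r z] frD[of r] r by auto
    show "T r \<zeta> > 0"
    proof (rule ccontr)
      assume "\<not> T r \<zeta> > 0"
      then have "T r \<zeta> = 0" using h by auto
      then have "P r \<zeta> = \<zeta>" using v0[OF z] by (simp add: P_def)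
      then show False using h z KD by auto
    qed
  qed
  have Pcont: "\<And>r. r \<in> {r0<..<0} \<Longrightarrow> continuous_on K (P r)"
  proof -
    fix r assume r: "r \<in> {r0<..<0}"
    have "continuous_on K (\<lambda>\<zeta>. (\<lambda>(\<zeta>, s). v \<zeta> s) (\<zeta>, T r \<zeta>))"
      by (rule continuous_on_compose2[OF vcont]) (auto intro!: continuous_intros Tcont[OF r] dest: hit[OF r])
    then show "continuous_on K (P r)" by (simp add: P_def)
  qed
  obtain ub where ub: "ub \<in> borel_measurable mu0" "AE x in mu0. ut x = ub x"
    using completion_ex_borel_measurable_real[OF assms(4)] by blast
  have ubB[measurable]: "ub \<in> borel_measurable borel" using ub(1) unfolding measurable_cong_sets[OF mu0s refl] .
  have radAE: "AE \<zeta> in mu0. \<zeta> \<in> K \<longrightarrow> ((\<lambda>t. u (v \<zeta> t)) \<longlongrightarrow> ut \<zeta>) (at_right 0)"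
    using assms(5) unfolding has_radial_limits_def K_def .
  have Kmeas[measurable]: "K \<in> sets borel" using Kclosed by (rule borel_closed)
  have fin0: "emeasure mu0 (space mu0) \<noteq> \<infinity>" using finite_measure.emeasure_finite[OF mu0f] by (simp add: top_ennreal_def[symmetric])
  show ?thesis unfolding has_boundary_values_def
  proof (intro allI impI)
    fix rj :: "nat \<Rightarrow> real"
    assume rjA: "incseq rj \<and> (\<forall>j. rj j < 0) \<and> rj \<longlonglongrightarrow> 0"
    then have rjneg: "\<And>j. rj j < 0" and rjlim: "rj \<longlonglongrightarrow> 0" by auto
    have rjf: "filterlim rj (at_left 0) sequentially"
      by (rule tendsto_imp_filterlim_at_left[OF rjlim]) (simp add: rjneg)
    obtain jr0 where jr0: "\<And>j. j \<ge> jr0 \<Longrightarrow> r0 < rj j"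
      using order_tendstoD(1)[OF rjlim r0] by (auto simp: eventually_sequentially)
    have rin: "\<And>j. j \<ge> jr0 \<Longrightarrow> rj j \<in> {r0<..<0}" using jr0 rjneg by auto
    show "\<exists>phis. has_strong_limit_values D mu mu0 rj (\<lambda>j. u) phis \<and> (AE x in mu0. phis x = ut x)"
    proof (intro exI conjI)
      show "AE x in mu0. ub x = ut x" using ub(2) by auto
      show "has_strong_limit_values D mu mu0 rj (\<lambda>j. u) ub"
        unfolding has_strong_limit_values_def
      proof (intro conjI allI impI)
        show "ub \<in> borel_measurable (completion mu0)"
          using ub(1) by (rule measurable_completion)
        fix a b \<epsilon> \<delta> :: real
        assume abed: "a < b \<and> 0 < \<epsilon> \<and> 0 < \<delta>"
        then have ab: "a < b" and e: "\<epsilon> > 0" and d: "\<delta> > 0" by auto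
        show "\<exists>j0 W. openin (top_of_set (closure D)) W \<and>
           {x \<in> measure_support mu0. a \<le> ub x \<and> ub x < b} \<subseteq> W \<and>
           (\<forall>j\<ge>j0.
              outer_measure_of (mu (rj j))
                  ({x \<in> measure_support (mu (rj j)). u x < a - \<epsilon>} \<inter> W)
            + outer_measure_of (mu (rj j))
                  ({x \<in> measure_support (mu (rj j)). u x > b + \<epsilon>} \<inter> W)
            < ennreal \<delta>)"
        proof -
          have close: "\<exists>N. \<forall>j\<ge>N. \<forall>\<zeta>\<in>K. dist (P (rj j) \<zeta>) \<zeta> < \<rho>" if \<rho>: "\<rho> > 0" for \<rho> :: real
          proof -
            have "compact (K \<times> {0..eps0/2})" using Kcompact by (intro compact_Times) auto
            moreover have "continuous_on (K \<times> {0..eps0/2}) (\<lambda>(\<zeta>, s). v \<zeta> s)"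
              by (rule continuous_on_subset[OF vcont]) (use eps0 in auto)
            ultimately have "uniformly_continuous_on (K \<times> {0..eps0/2}) (\<lambda>(\<zeta>, s). v \<zeta> s)"
              by (intro compact_uniformly_continuous)
            then obtain dd where dd: "dd > 0" and ddp: "\<And>x x'. x \<in> K \<times> {0..eps0/2} \<Longrightarrow> x' \<in> K \<times> {0..eps0/2} \<Longrightarrow>
                dist x' x < dd \<Longrightarrow> dist ((\<lambda>(\<zeta>, s). v \<zeta> s) x') ((\<lambda>(\<zeta>, s). v \<zeta> s) x) < \<rho>"
              unfolding uniformly_continuous_on_def using \<rho> by metis
            have "\<forall>\<^sub>F r in at_left 0. \<forall>\<zeta>\<in>K. dist (T r \<zeta>) 0 < min dd (eps0/2)"
            proof -
              have pos: "min dd (eps0/2) > 0" using dd eps0 by simp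
              show ?thesis using Tunif pos unfolding uniform_limit_iff by blast
            qed
            from eventually_compose_filterlim[OF this rjf]
            obtain N where N: "\<And>j \<zeta>. j \<ge> N \<Longrightarrow> \<zeta> \<in> K \<Longrightarrow> dist (T (rj j) \<zeta>) 0 < min dd (eps0/2)"
              by (auto simp: eventually_sequentially)
            show ?thesis
            proof (rule exI[of _ "max N jr0"], intro allI impI ballI)
              fix j \<zeta> assume j: "max N jr0 \<le> j" and z: "\<zeta> \<in> K"
              have t0: "T (rj j) \<zeta> \<ge> 0" using hit[OF rin[of j] z] j by auto
              have t1: "\<bar>T (rj j) \<zeta>\<bar> < min dd (eps0/2)" using N[of j \<zeta>] j z by auto
              have "dist ((\<lambda>(\<zeta>, s). v \<zeta> s) (\<zeta>, T (rj j) \<zeta>)) ((\<lambda>(\<zeta>, s). v \<zeta> s) (\<zeta>, 0)) < \<rho>"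
                using t0 t1 z eps0 by (intro ddp) (auto simp: dist_Pair_Pair)
              then show "dist (P (rj j) \<zeta>) \<zeta> < \<rho>" using v0[OF z] by (simp add: P_def)
            qed
          qed
          have convAE: "AE \<zeta> in mu0. \<zeta> \<in> K \<longrightarrow> (\<lambda>j. u (P (rj j) \<zeta>)) \<longlonglongrightarrow> ub \<zeta>"
            using radAE ub(2)
          proof eventually_elim
            case (elim \<zeta>)
            show ?case
            proof
              assume z: "\<zeta> \<in> K"
              have Tt: "((\<lambda>j. T (rj j) \<zeta>) \<longlongrightarrow> 0) sequentially"
                using filterlim_compose[OF tendsto_uniform_limitI[OF Tunif z] rjf] .
              have Tr: "filterlim (\<lambda>j. T (rj j) \<zeta>) (at_right 0) sequentially"
              proof (rule tendsto_imp_filterlim_at_right[OF Tt])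
                show "\<forall>\<^sub>F j in sequentially. T (rj j) \<zeta> > 0"
                  using Tpos[OF rin z] by (auto simp: eventually_sequentially intro!: exI[of _ jr0])
              qed
              have "(\<lambda>j. u (v \<zeta> (T (rj j) \<zeta>))) \<longlonglongrightarrow> ut \<zeta>"
                using filterlim_compose[OF elim(1)[rule_format, OF z] Tr] .
              then show "(\<lambda>j. u (P (rj j) \<zeta>)) \<longlonglongrightarrow> ub \<zeta>" using elim(2) by (simp add: P_def)
            qed
          qed
          have gmeas: "(\<lambda>\<zeta>. u (P (rj j) \<zeta>) - ub \<zeta>) \<in> borel_measurable (restrict_space borel K)"
            if j: "j \<ge> jr0" for j
          proof -
            have r: "rj j \<in> {r0<..<0}" using rin j by auto
            have "P (rj j) \<in> restrict_space borel K \<rightarrow>\<^sub>M restrict_space borel D"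
            proof (rule measurable_restrict_space2)
              show "P (rj j) \<in> space (restrict_space borel K) \<rightarrow> D"
                using hit[OF r] frD[of "rj j"] rjneg[of j] by (auto simp: space_restrict_space)
              show "P (rj j) \<in> borel_measurable (restrict_space borel K)"
                by (rule borel_measurable_continuous_on_restrict[OF Pcont[OF r]])
            qed
            from measurable_comp[OF this assms(3)]
            have "(\<lambda>\<zeta>. u (P (rj j) \<zeta>)) \<in> borel_measurable (restrict_space borel K)" by (simp add: o_def)
            moreover have "ub \<in> borel_measurable (restrict_space borel K)"
              using ubB by (rule measurable_restrict_space1)
            ultimately show ?thesis by (rule borel_measurable_diff)
          qed
          define Bj where "Bj j = {\<zeta>\<in>K. \<epsilon>/2 \<le> \<bar>u (P (rj j) \<zeta>) - ub \<zeta>\<bar>}" for j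
          have Bjm: "Bj j \<in> sets borel" if j: "j \<ge> jr0" for j
          proof -
            have m[measurable]: "(\<lambda>x. indicator K x *\<^sub>R (u (P (rj j) x) - ub x)) \<in> borel_measurable borel"
              using gmeas[OF j] by (subst (asm) borel_measurable_restrict_space_iff) auto
            have "Bj j = {x\<in>space borel. \<epsilon>/2 \<le> \<bar>indicator K x *\<^sub>R (u (P (rj j) x) - ub x)\<bar>}"
              using e by (auto simp: Bj_def indicator_def)
            also have "\<dots> \<in> sets borel" by measurable
            finally show ?thesis .
          qed
          define Nset where "Nset J = (\<Union>j\<in>{max J jr0..}. Bj j)" for J
          have Nsetm: "Nset J \<in> sets borel" for J
            unfolding Nset_def by (intro sets.countable_UN') (auto intro: Bjm)
          have NsetK: "Nset J \<subseteq> K" for J unfolding Nset_def Bj_def by auto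
          have Nsetdec: "decseq Nset"
            unfolding decseq_def Nset_def by (intro allI impI UN_mono) auto
          have Ninter: "emeasure mu0 (\<Inter>J. Nset J) = 0"
          proof -
            have "AE \<zeta> in mu0. \<zeta> \<notin> (\<Inter>J. Nset J)"
              using convAE
            proof eventually_elim
              case (elim \<zeta>)
              show ?case
              proof (cases "\<zeta> \<in> K")
                case True
                then have "(\<lambda>j. u (P (rj j) \<zeta>)) \<longlonglongrightarrow> ub \<zeta>" using elim by blast
                then have "eventually (\<lambda>j. dist (u (P (rj j) \<zeta>)) (ub \<zeta>) < \<epsilon>/2) sequentially"
                  using e by (intro tendstoD) auto
                then obtain N where "\<And>j. j \<ge> N \<Longrightarrow> dist (u (P (rj j) \<zeta>)) (ub \<zeta>) < \<epsilon>/2"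
                  by (auto simp: eventually_sequentially)
                then have "\<zeta> \<notin> Nset N" by (force simp: Nset_def Bj_def dist_real_def)
                then show ?thesis by blast
              next
                case False then show ?thesis using NsetK by blast
              qed
            qed
            moreover have "(\<Inter>J. Nset J) \<in> sets mu0"
              using Nsetm mu0s by (intro sets.countable_INT) auto
            ultimately show ?thesis
              by (subst (asm) AE_iff_measurable[of "\<Inter>J. Nset J"]) (auto simp: spaceB)
          qed
          define \<eta> where "\<eta> = \<delta> / (6 * c)"
          have eta: "\<eta> > 0" using d c by (simp add: \<eta>_def)
          have ceta: "ennreal c * ennreal \<eta> = ennreal (\<delta>/6)"
            using c d by (simp add: \<eta>_def ennreal_mult[symmetric])
          have "(\<lambda>J. emeasure mu0 (Nset J)) \<longlonglongrightarrow> emeasure mu0 (\<Inter>J. Nset J)"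
            by (rule Lim_emeasure_decseq) (use Nsetm mu0s Nsetdec finite_measure.emeasure_finite[OF mu0f] in
                \<open>auto simp: top_ennreal_def[symmetric]\<close>)
          then have "eventually (\<lambda>J. emeasure mu0 (Nset J) < ennreal \<eta>) sequentially"
            using Ninter eta by (intro order_tendstoD(2)) auto
          then obtain J1 where J1: "emeasure mu0 (Nset J1) < ennreal \<eta>"
            by (auto simp: eventually_sequentially)
          define Bd where "Bd = K \<inter> {\<zeta>\<in>space borel. ub \<zeta> < a - \<epsilon>/2 \<or> b + \<epsilon>/2 < ub \<zeta>}"
          have Bdm: "Bd \<in> sets borel" unfolding Bd_def by measurable
          have Bdm0: "Bd \<in> sets mu0" using Bdm mu0s by simp
          have inner: "emeasure mu0 Bd = (SUP C \<in> {C. C \<subseteq> Bd \<and> compact C}. emeasure mu0 C)"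
            by (rule inner_regular[OF mu0s fin0 Bdm])
          have Bdfin: "emeasure mu0 Bd \<noteq> \<infinity>"
            using finite_measure.emeasure_finite[OF mu0f] by (simp add: top_ennreal_def[symmetric])
          have ne: "{C. C \<subseteq> Bd \<and> compact C} \<noteq> {}"
          proof -
            have "{} \<in> {C. C \<subseteq> Bd \<and> compact C}" by simp
            then show ?thesis by blast
          qed
          from SUP_approx_ennreal[OF eta ne inner Bdfin]
          obtain C where C0: "C \<in> {C. C \<subseteq> Bd \<and> compact C}" and Cm: "emeasure mu0 Bd < emeasure mu0 C + ennreal \<eta>"
            by blast
          have C: "C \<subseteq> Bd" "compact C" using C0 by auto
          have Cm0: "C \<in> sets mu0" using borel_compact[OF C(2)] mu0s by simp
          have BdC: "emeasure mu0 (Bd - C) < ennreal \<eta>"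
          proof -
            have "emeasure mu0 C + emeasure mu0 (Bd - C) = emeasure mu0 Bd"
              using plus_emeasure[of C mu0 "Bd - C"] Cm0 Bdm0 C(1) by (auto simp: Un_absorb1)
            then have "emeasure mu0 C + emeasure mu0 (Bd - C) < emeasure mu0 C + ennreal \<eta>"
              using Cm by simp
            then show ?thesis by (simp add: ennreal_add_left_cancel_less)
          qed
          have cfin: "0 < ennreal c" "ennreal c < top" using c by auto
          have E2: "\<forall>\<^sub>F r in at_left 0. outer_measure_of (mu r) (P r ` (Bd - C)) < ennreal (\<delta>/6)"
          proof (rule Limsup_lessD)
            have "Limsup (at_left 0) (\<lambda>r. outer_measure_of (mu r) (P r ` (Bd - C))) \<le> ennreal c * emeasure mu0 (Bd - C)"
            proof (rule iii)
              show "Bd - C \<in> sets borel" using Bdm borel_compact[OF C(2)] by (rule sets.Diff)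
              show "Bd - C \<subseteq> K" unfolding Bd_def by blast
            qed
            also have "\<dots> < ennreal c * ennreal \<eta>" using BdC cfin by (intro ennreal_mult_strict_left_mono)
            finally show "Limsup (at_left 0) (\<lambda>r. outer_measure_of (mu r) (P r ` (Bd - C))) < ennreal (\<delta>/6)"
              using ceta by simp
          qed
          have E3: "\<forall>\<^sub>F r in at_left 0. outer_measure_of (mu r) (P r ` Nset J1) < ennreal (\<delta>/6)"
          proof (rule Limsup_lessD)
            have "Limsup (at_left 0) (\<lambda>r. outer_measure_of (mu r) (P r ` Nset J1)) \<le> ennreal c * emeasure mu0 (Nset J1)"
              by (rule iii[OF Nsetm NsetK])
            also have "\<dots> < ennreal c * ennreal \<eta>" using J1 cfin by (intro ennreal_mult_strict_left_mono)
            finally show "Limsup (at_left 0) (\<lambda>r. outer_measure_of (mu r) (P r ` Nset J1)) < ennreal (\<delta>/6)"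
              using ceta by simp
          qed
          have E1: "\<forall>\<^sub>F r in at_left 0. outer_measure_of (mu r) (frontier (Dr r) - P r ` K) < ennreal (\<delta>/6)"
            by (rule Limsup_lessD) (use iv d in simp)
          have "\<forall>\<^sub>F j in sequentially.
                outer_measure_of (mu (rj j)) (frontier (Dr (rj j)) - P (rj j) ` K) < ennreal (\<delta>/6) \<and>
                outer_measure_of (mu (rj j)) (P (rj j) ` (Bd - C)) < ennreal (\<delta>/6) \<and>
                outer_measure_of (mu (rj j)) (P (rj j) ` Nset J1) < ennreal (\<delta>/6)"
            using eventually_compose_filterlim[OF eventually_conj[OF E1 eventually_conj[OF E2 E3]] rjf] .
          then obtain N3 where N3: "\<And>j. j \<ge> N3 \<Longrightarrow>
                outer_measure_of (mu (rj j)) (frontier (Dr (rj j)) - P (rj j) ` K) < ennreal (\<delta>/6) \<and>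
                outer_measure_of (mu (rj j)) (P (rj j) ` (Bd - C)) < ennreal (\<delta>/6) \<and>
                outer_measure_of (mu (rj j)) (P (rj j) ` Nset J1) < ennreal (\<delta>/6)"
            by (auto simp: eventually_sequentially)
          define j0 where "j0 = max N3 (max J1 jr0)"
          define Z where "Z = closure (\<Union>j\<in>{j0..}. P (rj j) ` C)"
          define W where "W = closure D - Z"
          show ?thesis
          proof (intro exI conjI)
            show "openin (top_of_set (closure D)) W"
              unfolding openin_open W_def by (intro exI[of _ "- Z"]) (auto simp: Z_def)
            show "{x \<in> measure_support mu0. a \<le> ub x \<and> ub x < b} \<subseteq> W"
            proof
              fix x assume x: "x \<in> {x \<in> measure_support mu0. a \<le> ub x \<and> ub x < b}"
              then have xK: "x \<in> K" and xab: "a \<le> ub x" "ub x < b" by (auto simp: K_def)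
              have xC: "x \<notin> C" using C(1) xab e by (auto simp: Bd_def)
              have xcl: "x \<in> closure D" using xK Kcl by blast
              have "open (- C)" using compact_imp_closed[OF C(2)] by (simp add: open_Compl)
              then obtain dd where dd: "dd > 0" "ball x dd \<subseteq> - C"
                using xC by (meson ComplI open_contains_ball)
              obtain J2 where J2: "\<And>j \<zeta>. j \<ge> J2 \<Longrightarrow> \<zeta> \<in> K \<Longrightarrow> dist (P (rj j) \<zeta>) \<zeta> < dd/2"
                using close[of "dd/2"] dd(1) by auto
              define J3 where "J3 = max j0 J2"
              define R where "R = (\<Union>j\<in>{j0..<J3}. frontier (Dr (rj j))) \<union> - ball x (dd/2)"
              have sub: "(\<Union>j\<in>{j0..}. P (rj j) ` C) \<subseteq> R"
              proof
                fix y assume "y \<in> (\<Union>j\<in>{j0..}. P (rj j) ` C)"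
                then obtain j \<zeta> where j: "j \<ge> j0" and z: "\<zeta> \<in> C" and y: "y = P (rj j) \<zeta>" by auto
                have zK: "\<zeta> \<in> K" using z C(1) by (auto simp: Bd_def)
                show "y \<in> R"
                proof (cases "j < J3")
                  case True
                  have "j \<ge> jr0" using j by (simp add: j0_def)
                  then have "y \<in> frontier (Dr (rj j))" using hit[OF rin zK] y by auto
                  then show ?thesis using True j by (auto simp: R_def)
                next
                  case False
                  then have "dist y \<zeta> < dd/2" using J2[OF _ zK] y by (auto simp: J3_def)
                  moreover have "dist x \<zeta> \<ge> dd" using dd(2) z by (auto simp: subset_eq)
                  ultimately have "dist x y > dd/2" using dist_triangle[of x \<zeta> y] by (simp add: dist_commute)
                  then show ?thesis by (auto simp: R_def)
                qed
              qed
              have "closed R" unfolding R_def by (intro closed_Un closed_UN) auto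
              then have "Z \<subseteq> R" unfolding Z_def using sub by (intro closure_minimal)
              moreover have "x \<notin> R"
              proof -
                have "x \<notin> frontier (Dr (rj j))" if "j \<ge> j0" for j
                proof -
                  have "frontier (Dr (rj j)) \<subseteq> D" using frD[OF rjneg] .
                  then show ?thesis using xK KD by auto
                qed
                then show ?thesis using dd(1) by (auto simp: R_def)
              qed
              ultimately show "x \<in> W" using xcl by (auto simp: W_def)
            qed
            show "\<forall>j\<ge>j0.
              outer_measure_of (mu (rj j))
                  ({x \<in> measure_support (mu (rj j)). u x < a - \<epsilon>} \<inter> W)
            + outer_measure_of (mu (rj j))
                  ({x \<in> measure_support (mu (rj j)). u x > b + \<epsilon>} \<inter> W)
            < ennreal \<delta>"
            proof (intro allI impI)
              fix j assume j: "j \<ge> j0"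
              define r where "r = rj j"
              have rr: "r \<in> {r0<..<0}" using rin[of j] j by (simp add: r_def j0_def)
              have rneg: "r < 0" using rr by simp
              define X where "X = (frontier (Dr r) - P r ` K) \<union> P r ` (Bd - C) \<union> P r ` Nset J1"
              have N3j: "outer_measure_of (mu r) (frontier (Dr r) - P r ` K) < ennreal (\<delta>/6)"
                "outer_measure_of (mu r) (P r ` (Bd - C)) < ennreal (\<delta>/6)"
                "outer_measure_of (mu r) (P r ` Nset J1) < ennreal (\<delta>/6)"
                using N3[of j] j by (auto simp: r_def j0_def)
              have oX: "outer_measure_of (mu r) X < ennreal (\<delta>/2)"
              proof -
                have "outer_measure_of (mu r) X \<le>
                  outer_measure_of (mu r) ((frontier (Dr r) - P r ` K) \<union> P r ` (Bd - C)) + outer_measure_of (mu r) (P r ` Nset J1)"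
                  unfolding X_def by (rule outer_measure_of_Un) (auto simp: spaceR[OF rneg])
                also have "\<dots> \<le> (outer_measure_of (mu r) (frontier (Dr r) - P r ` K) + outer_measure_of (mu r) (P r ` (Bd - C)))
                   + outer_measure_of (mu r) (P r ` Nset J1)"
                  by (intro add_right_mono outer_measure_of_Un) (auto simp: spaceR[OF rneg])
                also have "\<dots> < ennreal ((\<delta>/6 + \<delta>/6) + \<delta>/6)"
                  by (intro add_mono_ennreal N3j)
                finally show ?thesis by simp
              qed
              have goodpt: "\<bar>u (P r \<zeta>) - ub \<zeta>\<bar> < \<epsilon>/2" if "\<zeta> \<in> K" "\<zeta> \<notin> Nset J1" for \<zeta>
              proof -
                have "j \<in> {max J1 jr0..}" using j by (simp add: j0_def)
                then have "\<zeta> \<notin> Bj j" using that(2) unfolding Nset_def by (meson UN_I)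
                then have "\<not> \<epsilon>/2 \<le> \<bar>u (P (rj j) \<zeta>) - ub \<zeta>\<bar>" using that(1) unfolding Bj_def by blast
                then show ?thesis unfolding r_def by linarith
              qed
              have inZ: "P r \<zeta> \<in> Z" if "\<zeta> \<in> C" for \<zeta>
              proof -
                have "P r \<zeta> \<in> P (rj j) ` C" using imageI[of \<zeta> C "P r", OF that] unfolding r_def .
                then have "P r \<zeta> \<in> (\<Union>j\<in>{j0..}. P (rj j) ` C)" using j by (intro UN_I[of j]) auto
                then show ?thesis unfolding Z_def by (rule closure_subset[THEN subsetD])
              qed
              have lowsub: "{x \<in> measure_support (mu r). u x < a - \<epsilon>} \<inter> W \<subseteq> X"
              proof
                fix x assume x: "x \<in> {x \<in> measure_support (mu r). u x < a - \<epsilon>} \<inter> W"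
                have xf: "x \<in> frontier (Dr r)" using x mur(2)[OF rneg] by auto
                show "x \<in> X"
                proof (cases "x \<in> P r ` K")
                  case False
                  then have "x \<in> frontier (Dr r) - P r ` K" using xf by blast
                  then show ?thesis unfolding X_def by blast
                next
                  case True
                  then obtain \<zeta> where z: "\<zeta> \<in> K" "x = P r \<zeta>" by blast
                  have zC: "\<zeta> \<notin> C"
                  proof
                    assume "\<zeta> \<in> C"
                    then have "x \<in> Z" using inZ z(2) by simp
                    then show False using x unfolding W_def by blast
                  qed
                  show ?thesis
                  proof (cases "\<zeta> \<in> Bd \<or> \<zeta> \<in> Nset J1")
                    case True
                    show ?thesis
                    proof (cases "\<zeta> \<in> Bd")
                      case True
                      then have "\<zeta> \<in> Bd - C" using zC by blast
                      from imageI[of \<zeta> "Bd - C" "P r", OF this]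
                      show ?thesis unfolding X_def z(2) by blast
                    next
                      case False
                      then have "\<zeta> \<in> Nset J1" using \<open>\<zeta> \<in> Bd \<or> \<zeta> \<in> Nset J1\<close> by blast
                      from imageI[of \<zeta> "Nset J1" "P r", OF this]
                      show ?thesis unfolding X_def z(2) by blast
                    qed
                  next
                    case False
                    then have "\<bar>u x - ub \<zeta>\<bar> < \<epsilon>/2" using goodpt z by auto
                    moreover have "a - \<epsilon>/2 \<le> ub \<zeta>" using False z by (auto simp: Bd_def)
                    moreover have "u x < a - \<epsilon>" using x by auto
                    ultimately have False unfolding abs_less_iff by linarith
                    then show ?thesis ..
                  qed
                qed
              qed
              have highsub: "{x \<in> measure_support (mu r). u x > b + \<epsilon>} \<inter> W \<subseteq> X"
              proof
                fix x assume x: "x \<in> {x \<in> measure_support (mu r). u x > b + \<epsilon>} \<inter> W"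
                have xf: "x \<in> frontier (Dr r)" using x mur(2)[OF rneg] by auto
                show "x \<in> X"
                proof (cases "x \<in> P r ` K")
                  case False
                  then have "x \<in> frontier (Dr r) - P r ` K" using xf by blast
                  then show ?thesis unfolding X_def by blast
                next
                  case True
                  then obtain \<zeta> where z: "\<zeta> \<in> K" "x = P r \<zeta>" by blast
                  have zC: "\<zeta> \<notin> C"
                  proof
                    assume "\<zeta> \<in> C"
                    then have "x \<in> Z" using inZ z(2) by simp
                    then show False using x unfolding W_def by blast
                  qed
                  show ?thesis
                  proof (cases "\<zeta> \<in> Bd \<or> \<zeta> \<in> Nset J1")
                    case True
                    show ?thesis
                    proof (cases "\<zeta> \<in> Bd")
                      case True
                      then have "\<zeta> \<in> Bd - C" using zC by blast
                      from imageI[of \<zeta> "Bd - C" "P r", OF this]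
                      show ?thesis unfolding X_def z(2) by blast
                    next
                      case False
                      then have "\<zeta> \<in> Nset J1" using \<open>\<zeta> \<in> Bd \<or> \<zeta> \<in> Nset J1\<close> by blast
                      from imageI[of \<zeta> "Nset J1" "P r", OF this]
                      show ?thesis unfolding X_def z(2) by blast
                    qed
                  next
                    case False
                    then have "\<bar>u x - ub \<zeta>\<bar> < \<epsilon>/2" using goodpt z by auto
                    moreover have "ub \<zeta> \<le> b + \<epsilon>/2" using False z by (auto simp: Bd_def)
                    moreover have "u x > b + \<epsilon>" using x by auto
                    ultimately have False unfolding abs_less_iff by linarith
                    then show ?thesis ..
                  qed
                qed
              qed
              have "outer_measure_of (mu r) ({x \<in> measure_support (mu r). u x < a - \<epsilon>} \<inter> W)
                  + outer_measure_of (mu r) ({x \<in> measure_support (mu r). u x > b + \<epsilon>} \<inter> W)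
                  \<le> outer_measure_of (mu r) X + outer_measure_of (mu r) X"
                by (intro add_mono outer_measure_of_mono lowsub highsub)
              also have "\<dots> < ennreal (\<delta>/2 + \<delta>/2)" by (intro add_mono_ennreal oX)
              finally show "outer_measure_of (mu (rj j)) ({x \<in> measure_support (mu (rj j)). u x < a - \<epsilon>} \<inter> W)
                  + outer_measure_of (mu (rj j)) ({x \<in> measure_support (mu (rj j)). u x > b + \<epsilon>} \<inter> W)
                  < ennreal \<delta>" by (simp add: r_def)
            qed
          qed
        qed
      qed
    qed
  qed
qed

end
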